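(* There exists a constant $c>0$ such that for $\mathbb{P}$-almost every $\omega\in\Omega$, for every light-rectangle $R\subseteq\mathbb{R}^2$ and every $Y>0$, $$\limsup_{n\to\infty}\ \sup_{y\in\llbracket -nY,nY\rrbracket}\frac1n L^{\uparrow}(\omega_y\cap nR)\le c\sqrt{\mathrm{Leb}(R)},$$ where $\mathrm{Leb}(R)$ is the area of $R$.
   Context: $\Omega$ is the set of locally finite subsets of $\mathbb{R}\times\mathbb{Z}\times\mathbb{R}_+$ with $\mathbb{P}$ the law of a Poisson point process of intensity $2$ (Lebesgue $\times$ counting $\times$ Lebesgue). For $y\in\mathbb{Z}$, $\omega_y=\{(x,t)\in\mathbb{R}^2:(x,y,t)\in\omega\}$. A light-rectangle is a closed rectangle in $\mathbb{R}^2$ whose sides are parallel to the lines $t=x$ or $t=-x$; $nR$ is its dilation by $n$. For a finite $A\subseteq\mathbb{R}^2$, $L^\uparrow(A)$ is the maximal number of points of $A$ visited by a light-path, i.e. a continuous $\gamma:[0,1]\to\mathbb{R}^2$ with $\gamma(b)-\gamma(a)\in\{(x,t):|x|\le t\}$ whenever $0\le a\le b\le1$. $\llbracket a,b\rrbracket$ denotes the integers in $[a,b]$. *)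

theory Defs
  imports "HOL-Probability.Probability"
begin

text \<open>Points of the process live in R x Z x R_+ ; a point is (x, y, t).\<close>

definition pp_bounded :: "(real \<times> int \<times> real) set \<Rightarrow> bool" where
  "pp_bounded B \<longleftrightarrow> (\<exists>r::real. \<forall>p\<in>B.
      \<bar>fst p\<bar> \<le> r \<and> \<bar>real_of_int (fst (snd p))\<bar> \<le> r \<and> \<bar>snd (snd p)\<bar> \<le> r)"

definition PPP_space :: "(real \<times> int \<times> real) set set" where
  "PPP_space = {\<omega>. \<omega> \<subseteq> UNIV \<times> UNIV \<times> {0..} \<and>
      (\<forall>B. pp_bounded B \<longrightarrow> finite (\<omega> \<inter> B))}"

definition pp_intensity :: "(real \<times> int \<times> real) set \<Rightarrow> ennreal" where
  "pp_intensity B = 2 * (\<integral>\<^sup>+ y. emeasure lborel {p :: real \<times> real. (fst p, y, snd p) \<in> B \<and> 0 \<le> snd p}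
                           \<partial>count_space UNIV)"

definition poisson_pp :: "(real \<times> int \<times> real) set measure \<Rightarrow> bool" where
  "poisson_pp P \<longleftrightarrow>
     prob_space P \<and> space P = PPP_space \<and>
     sets P = sigma_sets PPP_space
        {{\<omega>\<in>PPP_space. card (\<omega> \<inter> B) = k} | B k. B \<in> sets borel \<and> pp_bounded B} \<and>
     (\<forall>B k. B \<in> sets borel \<and> pp_bounded B \<longrightarrow>
        measure P {\<omega>\<in>space P. card (\<omega> \<inter> B) = k}
          = enn2real (pp_intensity B) ^ k / fact k * exp (- enn2real (pp_intensity B))) \<and>
     (\<forall>(I :: nat set) Bs. finite I \<longrightarrow> (\<forall>i\<in>I. Bs i \<in> sets borel \<and> pp_bounded (Bs i)) \<longrightarrow>
        disjoint_family_on Bs I \<longrightarrow>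
        prob_space.indep_vars P (\<lambda>_. count_space UNIV) (\<lambda>i \<omega>. card (\<omega> \<inter> Bs i)) I)"

definition slice :: "(real \<times> int \<times> real) set \<Rightarrow> int \<Rightarrow> (real \<times> real) set" where
  "slice \<omega> y = {(x, t). (x, y, t) \<in> \<omega>}"

definition light_path :: "(real \<Rightarrow> real \<times> real) \<Rightarrow> bool" where
  "light_path \<gamma> \<longleftrightarrow> continuous_on {0..1} \<gamma> \<and>
     (\<forall>a b. 0 \<le> a \<and> a \<le> b \<and> b \<le> 1 \<longrightarrow>
        \<bar>fst (\<gamma> b) - fst (\<gamma> a)\<bar> \<le> snd (\<gamma> b) - snd (\<gamma> a))"

definition Lup :: "(real \<times> real) set \<Rightarrow> nat" where
  "Lup A = Max {card (A \<inter> \<gamma> ` {0..1}) | \<gamma>. light_path \<gamma>}"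

text \<open>Light-rectangle: closed rectangle with sides parallel to t = x and t = -x
  (coordinates (x, t)).\<close>
definition light_rect :: "(real \<times> real) set \<Rightarrow> bool" where
  "light_rect R \<longleftrightarrow> (\<exists>a b c d. a < b \<and> c < d \<and>
     R = {p. a \<le> snd p - fst p \<and> snd p - fst p \<le> b \<and> c \<le> snd p + fst p \<and> snd p + fst p \<le> d})"

definition dilate :: "real \<Rightarrow> (real \<times> real) set \<Rightarrow> (real \<times> real) set" where
  "dilate n R = (\<lambda>p. n *\<^sub>R p) ` R"

end

theory Submission
  imports Defs
begin


definition rectuv :: "real \<Rightarrow> real \<Rightarrow> real \<Rightarrow> real \<Rightarrow> (real \<times> real) set" where
  "rectuv a b c d = {p. a \<le> snd p - fst p \<and> snd p - fst p \<le> b \<and> c \<le> snd p + fst p \<and> snd p + fst p \<le> d}"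

lemma rectuv_closed: "closed (rectuv a b c d)"
  unfolding rectuv_def
  by (intro closed_Collect_conj closed_Collect_le continuous_intros)

lemma rectuv_borel[measurable]: "rectuv a b c d \<in> sets borel"
  using rectuv_closed by (rule borel_closed)

lemma emeasure_rectuv:
  assumes "a \<le> b" "c \<le> d"
  shows "emeasure lborel (rectuv a b c d) = ennreal ((b - a) * (d - c) / 2)"
proof -
  let ?R = "rectuv a b c d"
  have "emeasure lborel ?R = (\<integral>\<^sup>+p. indicator ?R p \<partial>lborel)"
    by (simp add: nn_integral_indicator)
  also have "\<dots> = (\<integral>\<^sup>+p. indicator ?R p \<partial>(lborel \<Otimes>\<^sub>M lborel))"
    by (simp add: lborel_prod)
  also have "\<dots> = (\<integral>\<^sup>+x. (\<integral>\<^sup>+t. indicator ?R (x, t) \<partial>lborel) \<partial>lborel)"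
    by (subst lborel.nn_integral_fst[symmetric]) (auto simp: lborel_prod)
  also have "\<dots> = (\<integral>\<^sup>+x. (\<integral>\<^sup>+w. indicator {a..b} w * indicator {(c - w)/2..(d - w)/2} x \<partial>lborel) \<partial>lborel)"
  proof (rule nn_integral_cong)
    fix x :: real
    have "(\<integral>\<^sup>+t. indicator ?R (x, t) \<partial>lborel) = (\<integral>\<^sup>+w. indicator ?R (x, x + 1 * w) \<partial>lborel)"
      using nn_integral_real_affine[of "\<lambda>t. indicator ?R (x, t)" 1 x] by simp
    also have "\<dots> = (\<integral>\<^sup>+w. indicator {a..b} w * indicator {(c - w)/2..(d - w)/2} x \<partial>lborel)"
      by (intro nn_integral_cong) (auto simp: rectuv_def indicator_def)
    finally show "(\<integral>\<^sup>+t. indicator ?R (x, t) \<partial>lborel) = \<dots>" .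
  qed
  also have "\<dots> = (\<integral>\<^sup>+w. (\<integral>\<^sup>+x. indicator {a..b} w * indicator {(c - w)/2..(d - w)/2} x \<partial>lborel) \<partial>lborel)"
    by (rule lborel_pair.Fubini'[symmetric]) (measurable, unfold atLeastAtMost_iff, measurable)
  also have "\<dots> = (\<integral>\<^sup>+w. indicator {a..b} w * ennreal ((d - c) / 2) \<partial>lborel)"
  proof (rule nn_integral_cong)
    fix w :: real
    have "(\<integral>\<^sup>+x. indicator {a..b} w * indicator {(c - w)/2..(d - w)/2} x \<partial>lborel)
        = indicator {a..b} w * (\<integral>\<^sup>+x. indicator {(c - w)/2..(d - w)/2} x \<partial>lborel)"
      by (rule nn_integral_cmult) auto
    also have "\<dots> = indicator {a..b} w * ennreal ((d - c) / 2)"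
      using assms by (simp add: field_simps)
    finally show "(\<integral>\<^sup>+x. indicator {a..b} w * indicator {(c - w)/2..(d - w)/2} x \<partial>lborel) = \<dots>" .
  qed
  also have "\<dots> = ennreal ((d - c) / 2) * emeasure lborel {a..b}"
    by (subst mult.commute, subst nn_integral_cmult_indicator) auto
  also have "\<dots> = ennreal ((b - a) * (d - c) / 2)"
    using assms by (simp add: ennreal_mult[symmetric] field_simps)
  finally show ?thesis .
qed



lemma exp_tail:
  fixes \<mu> :: real assumes "0 \<le> \<mu>"
  shows "exp \<mu> \<le> (\<Sum>k<m. \<mu>^k / fact k) + \<mu>^m / fact m * exp \<mu>"
proof -
  define f where "f n = \<mu>^n / fact n" for n
  have s: "f sums exp \<mu>"
  proof -
    have "f = (\<lambda>n. inverse (fact n) * \<mu>^n)" by (auto simp: f_def fun_eq_iff divide_inverse)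
    then show ?thesis using exp_converges[of \<mu>] by simp
  qed
  have sm: "summable f" using s by (rule sums_summable)
  have fnn: "0 \<le> f n" for n using assms by (simp add: f_def)
  have le: "f (j + m) \<le> f m * f j" for j
  proof -
    have d: "fact m * fact j \<le> (fact (j + m) :: nat)"
      by (rule dvd_imp_le) (use fact_fact_dvd_fact[of m j] in \<open>auto simp: add.commute\<close>)
    have d': "(fact m * fact j :: real) \<le> fact (j + m)"
      using d by (metis of_nat_fact of_nat_le_iff of_nat_mult)
    have "\<mu>^(j+m) / fact (j+m) \<le> \<mu>^(j+m) / (fact m * fact j)"
      by (rule divide_left_mono) (use d' assms in auto)
    then show ?thesis by (simp add: f_def power_add mult.commute)
  qed
  have "exp \<mu> = suminf f" using s by (simp add: sums_iff)
  also have "\<dots> = (\<Sum>j. f (j + m)) + (\<Sum>k<m. f k)"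
    by (rule suminf_split_initial_segment[OF sm])
  also have "(\<Sum>j. f (j + m)) \<le> (\<Sum>j. f m * f j)"
    by (rule suminf_le) (use le sm summable_ignore_initial_segment[OF sm] summable_mult[OF sm] in auto)
  also have "(\<Sum>j. f m * f j) = f m * exp \<mu>"
    using suminf_mult[OF sm, of "f m"] s by (simp add: sums_iff)
  finally show ?thesis by (simp add: f_def add.commute)
qed

lemma poisson_sets:
  assumes P: "poisson_pp P" and B: "B \<in> sets borel" "pp_bounded B"
  shows "{\<omega>\<in>space P. card (\<omega> \<inter> B) = k} \<in> sets P"
proof -
  have sp: "space P = PPP_space" and ss: "sets P = sigma_sets PPP_space
        {{\<omega>\<in>PPP_space. card (\<omega> \<inter> B) = k} | B k. B \<in> sets borel \<and> pp_bounded B}"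
    using P unfolding poisson_pp_def by auto
  show ?thesis unfolding ss sp
    by (rule sigma_sets.Basic) (use B in blast)
qed

lemma poisson_ge_sets:
  assumes P: "poisson_pp P" and B: "B \<in> sets borel" "pp_bounded B"
  shows "{\<omega>\<in>space P. m \<le> card (\<omega> \<inter> B)} \<in> sets P"
proof -
  have "{\<omega>\<in>space P. m \<le> card (\<omega> \<inter> B)} = space P - (\<Union>k<m. {\<omega>\<in>space P. card (\<omega> \<inter> B) = k})"
    by auto
  also have "\<dots> \<in> sets P"
    using poisson_sets[OF assms] by auto
  finally show ?thesis .
qed

lemma poisson_tail:
  assumes P: "poisson_pp P" and B: "B \<in> sets borel" "pp_bounded B"
  shows "measure P {\<omega>\<in>space P. m \<le> card (\<omega> \<inter> B)} \<le> enn2real (pp_intensity B) ^ m / fact m"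
proof -
  interpret prob_space P using P unfolding poisson_pp_def by auto
  define \<mu> where "\<mu> = enn2real (pp_intensity B)"
  have \<mu>0: "0 \<le> \<mu>" by (simp add: \<mu>_def)
  define N where "N k = {\<omega>\<in>space P. card (\<omega> \<inter> B) = k}" for k
  have Ns: "N k \<in> sets P" for k unfolding N_def by (rule poisson_sets[OF assms])
  have NP: "prob (N k) = \<mu> ^ k / fact k * exp (- \<mu>)" for k
    using P B unfolding poisson_pp_def N_def \<mu>_def by auto
  have eq: "{\<omega>\<in>space P. m \<le> card (\<omega> \<inter> B)} = space P - (\<Union>k<m. N k)"
    by (auto simp: N_def)
  have "prob (\<Union>k<m. N k) = (\<Sum>k<m. prob (N k))"
    by (rule finite_measure_finite_Union) (use Ns in \<open>auto simp: disjoint_family_on_def N_def\<close>)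
  then have "prob {\<omega>\<in>space P. m \<le> card (\<omega> \<inter> B)} = 1 - (\<Sum>k<m. \<mu> ^ k / fact k * exp (- \<mu>))"
    unfolding eq using Ns by (subst prob_compl) (auto simp: NP)
  also have "\<dots> = 1 - exp (- \<mu>) * (\<Sum>k<m. \<mu> ^ k / fact k)"
    by (simp add: sum_distrib_left mult.commute)
  also have "\<dots> \<le> \<mu> ^ m / fact m"
  proof -
    have "exp \<mu> \<le> (\<Sum>k<m. \<mu>^k / fact k) + \<mu>^m / fact m * exp \<mu>" by (rule exp_tail[OF \<mu>0])
    then have "exp (-\<mu>) * exp \<mu> \<le> exp (-\<mu>) * ((\<Sum>k<m. \<mu>^k / fact k) + \<mu>^m / fact m * exp \<mu>)"
      by (rule mult_left_mono) auto
    then show ?thesis by (simp add: exp_minus field_simps)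
  qed
  finally show ?thesis by (simp add: \<mu>_def)
qed

lemma fact_bound:
  fixes \<mu> :: real assumes "0 \<le> \<mu>" "m \<ge> 1"
  shows "\<mu> ^ m / fact m \<le> (exp 1 * \<mu> / m) ^ m"
proof -
  have "real m ^ m / fact m \<le> exp (real m)"
  proof -
    have e: "(\<lambda>n. real m ^ n / fact n) = (\<lambda>n. inverse (fact n) * real m ^ n)"
      by (auto simp: fun_eq_iff divide_inverse)
    have "(\<lambda>n. real m ^ n / fact n) sums exp (real m)"
      unfolding e using exp_converges[of "real m"] by simp
    then have "sum (\<lambda>n. real m ^ n / fact n) {m} \<le> suminf (\<lambda>n. real m ^ n / fact n)"
      by (intro sum_le_suminf) (auto intro: sums_summable)
    with \<open>(\<lambda>n. real m ^ n / fact n) sums exp (real m)\<close>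
    have "sum (\<lambda>n. real m ^ n / fact n) {m} \<le> exp (real m)"
      by (simp add: sums_iff)
    then show ?thesis by simp
  qed
  then have "real m ^ m \<le> exp (real m) * fact m" by (simp add: divide_le_eq)
  have "\<mu> ^ m / fact m = (\<mu> / m) ^ m * (real m ^ m / fact m)"
    using assms by (simp add: power_divide)
  also have "\<dots> \<le> (\<mu> / m) ^ m * exp (real m)"
    by (rule mult_left_mono) (use \<open>real m ^ m / fact m \<le> exp (real m)\<close> assms in auto)
  also have "exp (real m) = exp 1 ^ m" by (simp add: exp_of_nat_mult[symmetric])
  also have "(\<mu> / m) ^ m * exp 1 ^ m = (exp 1 * \<mu> / m) ^ m"
    by (simp add: power_mult_distrib[symmetric] mult.commute)
  finally show ?thesis .
qed



definition stair :: "nat \<Rightarrow> nat set \<Rightarrow> (nat \<times> nat) set" where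
  "stair M T = {(i, j). i < M \<and> j < M \<and> card (T \<inter> {..<i+j}) = i}"

lemma stair_sub: "stair M T \<subseteq> (\<lambda>k. (card (T \<inter> {..<k}), k - card (T \<inter> {..<k}))) ` {..<2*M}"
proof
  fix p assume "p \<in> stair M T"
  then obtain i j where p: "p = (i, j)" "i < M" "j < M" "card (T \<inter> {..<i+j}) = i"
    unfolding stair_def by auto
  then show "p \<in> (\<lambda>k. (card (T \<inter> {..<k}), k - card (T \<inter> {..<k}))) ` {..<2*M}"
    by (intro image_eqI[of _ _ "i+j"]) auto
qed

lemma stair_finite: "finite (stair M T)"
  using stair_sub by (rule finite_subset) auto

lemma stair_card: "card (stair M T) \<le> 2 * M"
proof -
  have "card (stair M T) \<le> card ((\<lambda>k. (card (T \<inter> {..<k}), k - card (T \<inter> {..<k}))) ` {..<2*M})"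
    by (rule card_mono[OF _ stair_sub]) auto
  also have "\<dots> \<le> card {..<2*M}" by (rule card_image_le) auto
  finally show ?thesis by simp
qed

definition pcomp :: "nat \<times> nat \<Rightarrow> nat \<times> nat \<Rightarrow> bool" where
  "pcomp p q \<longleftrightarrow> (fst p \<le> fst q \<and> snd p \<le> snd q) \<or> (fst q \<le> fst p \<and> snd q \<le> snd p)"

lemma card_count:
  fixes F :: "nat \<Rightarrow> nat"
  assumes F0: "F 0 = 0" and Fs: "\<And>k. F (Suc k) = F k \<or> F (Suc k) = Suc (F k)"
  shows "k \<le> L \<Longrightarrow> card ({k. k < L \<and> F (Suc k) = Suc (F k)} \<inter> {..<k}) = F k"
proof (induction k)
  case 0 then show ?case using F0 by simp
next
  case (Suc k)
  let ?T = "{k. k < L \<and> F (Suc k) = Suc (F k)}"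
  have e: "?T \<inter> {..<Suc k} = (?T \<inter> {..<k}) \<union> (if k \<in> ?T then {k} else {})"
    by (auto simp: less_Suc_eq)
  show ?case
  proof (cases "k \<in> ?T")
    case True
    then show ?thesis using Suc by (simp add: e)
  next
    case False
    then have "F (Suc k) = F k" using Fs[of k] Suc.prems by auto
    then show ?thesis using Suc False by (simp add: e)
  qed
qed

lemma chain_in_stair:
  assumes fin: "finite C" and sub: "C \<subseteq> {..<M} \<times> {..<M}"
    and ch: "\<And>p q. p \<in> C \<Longrightarrow> q \<in> C \<Longrightarrow> pcomp p q"
  shows "\<exists>T. T \<subseteq> {..<2*M} \<and> C \<subseteq> stair M T"
proof -
  define F where "F k = Max (insert 0 ((\<lambda>(i,j). min i (k - j)) ` C))" for k
  have finS: "finite (insert 0 ((\<lambda>(i,j). min i (k - j)) ` C))" for k using fin by auto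
  have F0: "F 0 = 0" unfolding F_def by (rule Max_eqI) (use fin in auto)
  have Fmono: "F k \<le> F (Suc k)" for k
  proof -
    have "x \<le> F (Suc k)" if "x \<in> insert 0 ((\<lambda>(i,j). min i (k - j)) ` C)" for x
    proof -
      from that consider "x = 0" | i j where "(i,j) \<in> C" "x = min i (k - j)" by auto
      then show ?thesis
      proof cases
        case 2
        have "min i (Suc k - j) \<le> F (Suc k)" unfolding F_def
          by (rule Max_ge[OF finS]) (use 2 in force)
        then show ?thesis using 2 by linarith
      qed simp
    qed
    then show ?thesis unfolding F_def[of k] using finS by (intro Max.boundedI) auto
  qed
  have Fstep: "F (Suc k) \<le> Suc (F k)" for k
  proof -
    have "x \<le> Suc (F k)" if "x \<in> insert 0 ((\<lambda>(i,j). min i (Suc k - j)) ` C)" for x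
    proof -
      from that consider "x = 0" | i j where "(i,j) \<in> C" "x = min i (Suc k - j)" by auto
      then show ?thesis
      proof cases
        case 2
        have "min i (k - j) \<le> F k" unfolding F_def
          by (rule Max_ge[OF finS]) (use 2 in force)
        then show ?thesis using 2 by linarith
      qed simp
    qed
    then show ?thesis unfolding F_def[of "Suc k"] using finS by (intro Max.boundedI) auto
  qed
  have Fs: "F (Suc k) = F k \<or> F (Suc k) = Suc (F k)" for k
    using Fmono[of k] Fstep[of k] by linarith
  define T where "T = {k. k < 2*M \<and> F (Suc k) = Suc (F k)}"
  have cT: "card (T \<inter> {..<k}) = F k" if "k \<le> 2*M" for k
    unfolding T_def by (rule card_count[OF F0 Fs that])
  have "C \<subseteq> stair M T"
  proof
    fix p assume pC: "p \<in> C"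
    obtain i j where p: "p = (i,j)" by (cases p)
    have ij: "i < M" "j < M" using sub pC p by auto
    have "F (i+j) = i" unfolding F_def
    proof (rule Max_eqI[OF finS])
      show "i \<in> insert 0 ((\<lambda>(i',j'). min i' (i + j - j')) ` C)"
        using pC p by force
      fix y assume "y \<in> insert 0 ((\<lambda>(i',j'). min i' (i + j - j')) ` C)"
      then consider "y = 0" | i' j' where "(i',j') \<in> C" "y = min i' (i + j - j')" by auto
      then show "y \<le> i"
      proof cases
        case 2
        have "pcomp (i,j) (i',j')" using ch pC p 2(1) by auto
        then show ?thesis using 2 unfolding pcomp_def by auto
      qed simp
    qed
    then show "p \<in> stair M T" using cT[of "i+j"] ij p unfolding stair_def by auto
  qed
  moreover have "T \<subseteq> {..<2*M}" unfolding T_def by auto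
  ultimately show ?thesis by blast
qed



definition idx :: "real \<Rightarrow> real \<Rightarrow> nat \<Rightarrow> real \<Rightarrow> nat" where
  "idx A h M w = min (M - 1) (nat \<lfloor>(w - A) / h\<rfloor>)"

lemma idx_mono: "h > 0 \<Longrightarrow> w \<le> w' \<Longrightarrow> idx A h M w \<le> idx A h M w'"
  unfolding idx_def by (intro min.mono order.refl nat_mono floor_mono divide_right_mono) auto

lemma idx_lt: "M \<ge> 1 \<Longrightarrow> idx A h M w < M"
  unfolding idx_def by auto

lemma idx_cell:
  fixes A h w :: real
  assumes h: "h > 0" and M: "M \<ge> 1" and w: "A \<le> w" "w \<le> A + M * h"
  shows "A + idx A h M w * h \<le> w \<and> w \<le> A + (idx A h M w + 1) * h"
proof -
  define f where "f = nat \<lfloor>(w - A) / h\<rfloor>"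
  have q0: "0 \<le> (w - A) / h" using h w by auto
  have rf: "real f = of_int \<lfloor>(w - A) / h\<rfloor>" unfolding f_def using q0 by simp
  have f1: "real f \<le> (w - A) / h" using rf by linarith
  have f2: "(w - A) / h < real f + 1" using rf by linarith
  have f1': "real f * h \<le> w - A" using f1 h by (simp add: field_simps)
  have f2': "w - A < (real f + 1) * h" using f2 h by (simp add: field_simps)
  show ?thesis
  proof (cases "f \<le> M - 1")
    case True
    then have "idx A h M w = f" unfolding idx_def f_def by auto
    then show ?thesis using f1' f2' by (auto simp: algebra_simps)
  next
    case False
    then have i: "idx A h M w = M - 1" unfolding idx_def f_def by auto
    have "M \<le> f" using False by auto
    then have "real M * h \<le> real f * h" using h by auto
    moreover have "real (M - 1) \<le> real M" by auto
    ultimately have "real (M - 1) * h \<le> w - A" using f1' h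
      by (meson dual_order.trans mult_right_mono less_imp_le)
    moreover have "real (M - 1) + 1 = real M" using M by auto
    ultimately show ?thesis using i w by auto
  qed
qed

definition uu :: "real \<times> real \<Rightarrow> real" where "uu p = snd p - fst p"
definition vv :: "real \<times> real \<Rightarrow> real" where "vv p = snd p + fst p"

lemma light_path_cmp:
  assumes "light_path \<gamma>" "p \<in> \<gamma> ` {0..1}" "q \<in> \<gamma> ` {0..1}"
  shows "(uu p \<le> uu q \<and> vv p \<le> vv q) \<or> (uu q \<le> uu p \<and> vv q \<le> vv p)"
proof -
  obtain a b where ab: "a \<in> {0..1}" "b \<in> {0..1}" "p = \<gamma> a" "q = \<gamma> b" using assms by auto
  have L: "\<And>a b. 0 \<le> a \<Longrightarrow> a \<le> b \<Longrightarrow> b \<le> 1 \<Longrightarrow> \<bar>fst (\<gamma> b) - fst (\<gamma> a)\<bar> \<le> snd (\<gamma> b) - snd (\<gamma> a)"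
    using assms(1) unfolding light_path_def by blast
  show ?thesis
  proof (cases "a \<le> b")
    case True
    then have "\<bar>fst q - fst p\<bar> \<le> snd q - snd p" using L ab by auto
    then show ?thesis unfolding uu_def vv_def by auto
  next
    case False
    then have "\<bar>fst p - fst q\<bar> \<le> snd p - snd q" using L ab by auto
    then show ?thesis unfolding uu_def vv_def by auto
  qed
qed

locale grid =
  fixes A1 B1 A2 B2 :: real and M :: nat
  assumes lt1: "A1 < B1" and lt2: "A2 < B2" and M1: "M \<ge> 1"
begin

definition "h1 = (B1 - A1) / M"
definition "h2 = (B2 - A2) / M"

lemma h_pos: "h1 > 0" "h2 > 0"
  using lt1 lt2 M1 by (auto simp: h1_def h2_def)

lemma B_eq: "B1 = A1 + M * h1" "B2 = A2 + M * h2"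
  using M1 by (auto simp: h1_def h2_def)

definition cell :: "nat \<times> nat \<Rightarrow> (real \<times> real) set" where
  "cell c = rectuv (A1 + fst c * h1) (A1 + (fst c + 1) * h1) (A2 + snd c * h2) (A2 + (snd c + 1) * h2)"

definition cidx :: "real \<times> real \<Rightarrow> nat \<times> nat" where
  "cidx p = (idx A1 h1 M (uu p), idx A2 h2 M (vv p))"

lemma in_cell:
  assumes "p \<in> rectuv A1 B1 A2 B2" shows "p \<in> cell (cidx p)"
proof -
  have u: "A1 \<le> uu p" "uu p \<le> A1 + M * h1" and v: "A2 \<le> vv p" "vv p \<le> A2 + M * h2"
    using assms B_eq unfolding rectuv_def uu_def vv_def by auto
  show ?thesis
    using idx_cell[OF h_pos(1) M1 u] idx_cell[OF h_pos(2) M1 v]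
    unfolding cell_def cidx_def rectuv_def uu_def vv_def by (auto simp: add.commute)
qed

definition region :: "nat set \<Rightarrow> (real \<times> real) set" where
  "region T = (\<Union>c\<in>stair M T. cell c)"

lemma cell_sub: "c \<in> {..<M} \<times> {..<M} \<Longrightarrow> cell c \<subseteq> rectuv A1 B1 A2 B2"
proof -
  assume c: "c \<in> {..<M} \<times> {..<M}"
  obtain i j where ij: "c = (i, j)" by (cases c)
  have "real i + 1 \<le> M" "real j + 1 \<le> M"
    using c ij by (auto simp flip: of_nat_Suc)
  then have "(real i + 1) * h1 \<le> M * h1" "(real j + 1) * h2 \<le> M * h2"
    using h_pos by (auto intro: mult_right_mono)
  moreover have "0 \<le> real i * h1" "0 \<le> real j * h2" using h_pos by auto
  ultimately show ?thesis using B_eq unfolding cell_def rectuv_def ij by auto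
qed

lemma region_sub: "region T \<subseteq> rectuv A1 B1 A2 B2"
  unfolding region_def using cell_sub by (auto simp: stair_def)

lemma region_closed: "closed (region T)"
  unfolding region_def by (intro closed_UN) (auto simp: stair_finite cell_def rectuv_closed)

lemma region_borel[measurable]: "region T \<in> sets borel"
  using region_closed by (rule borel_closed)

lemma emeasure_region: "emeasure lborel (region T) \<le> ennreal (M * h1 * h2)"
proof -
  have "emeasure lborel (region T) \<le> (\<Sum>c\<in>stair M T. emeasure lborel (cell c))"
    unfolding region_def by (rule emeasure_subadditive_finite) (auto simp: stair_finite cell_def)
  also have "\<dots> = (\<Sum>c\<in>stair M T. ennreal (h1 * h2 / 2))"
    using h_pos by (intro sum.cong refl) (simp add: cell_def emeasure_rectuv algebra_simps)
  also have "\<dots> = of_nat (card (stair M T)) * ennreal (h1 * h2 / 2)" by simp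
  also have "\<dots> \<le> of_nat (2 * M) * ennreal (h1 * h2 / 2)"
  proof -
    have "(of_nat (card (stair M T)) :: ennreal) \<le> of_nat (2 * M)"
      by (simp only: of_nat_le_iff stair_card)
    then show ?thesis by (intro mult_right_mono) auto
  qed
  also have "\<dots> = ennreal (M * h1 * h2)"
    using h_pos by (simp add: ennreal_of_nat_eq_real_of_nat ennreal_mult[symmetric])
  finally show ?thesis .
qed

definition BT :: "nat set \<Rightarrow> int \<Rightarrow> (real \<times> int \<times> real) set" where
  "BT T y = {p. (fst p, snd (snd p)) \<in> region T \<and> fst (snd p) = y}"

lemma BT_closed: "closed (BT T y)"
proof -
  have "BT T y = (\<lambda>p. (fst p, snd (snd p))) -` region T \<inter> {p. fst (snd p) = y}"
    unfolding BT_def by auto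
  also have "closed \<dots>"
    by (intro closed_Int continuous_closed_vimage region_closed closed_Collect_eq continuous_intros)
  finally show ?thesis .
qed

lemma BT_borel: "BT T y \<in> sets borel"
  using BT_closed by (rule borel_closed)

lemma BT_bounded: "pp_bounded (BT T y)"
  unfolding pp_bounded_def
proof (intro exI ballI)
  fix p assume "p \<in> BT T y"
  then have "(fst p, snd (snd p)) \<in> rectuv A1 B1 A2 B2" "fst (snd p) = y"
    using region_sub unfolding BT_def by auto
  then show "\<bar>fst p\<bar> \<le> \<bar>A1\<bar> + \<bar>B1\<bar> + \<bar>A2\<bar> + \<bar>B2\<bar> + \<bar>real_of_int y\<bar> \<and>
    \<bar>real_of_int (fst (snd p))\<bar> \<le> \<bar>A1\<bar> + \<bar>B1\<bar> + \<bar>A2\<bar> + \<bar>B2\<bar> + \<bar>real_of_int y\<bar> \<and>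
    \<bar>snd (snd p)\<bar> \<le> \<bar>A1\<bar> + \<bar>B1\<bar> + \<bar>A2\<bar> + \<bar>B2\<bar> + \<bar>real_of_int y\<bar>"
    unfolding rectuv_def by auto
qed

lemma intensity_BT: "enn2real (pp_intensity (BT T y)) \<le> 2 * (B1 - A1) * (B2 - A2) / M"
proof -
  have le: "emeasure lborel {p :: real \<times> real. (fst p, y', snd p) \<in> BT T y \<and> 0 \<le> snd p}
      \<le> emeasure lborel (region T) * indicator {y} y'" for y'
  proof (cases "y' = y")
    case True
    have "{p :: real \<times> real. (fst p, y', snd p) \<in> BT T y \<and> 0 \<le> snd p} \<subseteq> region T"
      by (auto simp: BT_def)
    from emeasure_mono[OF this, of lborel] show ?thesis by (simp add: True)
  next
    case False
    then have "{p :: real \<times> real. (fst p, y', snd p) \<in> BT T y \<and> 0 \<le> snd p} = {}"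
      by (auto simp: BT_def)
    then have "emeasure lborel {p :: real \<times> real. (fst p, y', snd p) \<in> BT T y \<and> 0 \<le> snd p} = 0"
      by (simp only: emeasure_empty)
    then show ?thesis by simp
  qed
  have "pp_intensity (BT T y) \<le> 2 * (\<integral>\<^sup>+y'. emeasure lborel (region T) * indicator {y} y' \<partial>count_space UNIV)"
    unfolding pp_intensity_def by (intro mult_left_mono nn_integral_mono le) auto
  also have "\<dots> = 2 * emeasure lborel (region T)"
    by (subst nn_integral_cmult_indicator) auto
  also have "\<dots> \<le> 2 * ennreal (M * h1 * h2)"
    by (intro mult_left_mono emeasure_region) auto
  also have "\<dots> = ennreal (2 * (B1 - A1) * (B2 - A2) / M)"
  proof -
    have r: "2 * (M * h1 * h2) = 2 * (B1 - A1) * (B2 - A2) / M"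
      using M1 by (simp add: h1_def h2_def field_simps power2_eq_square)
    have "2 * ennreal (M * h1 * h2) = ennreal (2 * (M * h1 * h2))"
      using h_pos by (simp add: ennreal_mult)
    then show ?thesis by (simp only: r)
  qed
  finally have "pp_intensity (BT T y) \<le> ennreal (2 * (B1 - A1) * (B2 - A2) / M)" .
  then have "enn2real (pp_intensity (BT T y)) \<le> enn2real (ennreal (2 * (B1 - A1) * (B2 - A2) / M))"
    by (rule enn2real_mono) simp
  also have "\<dots> = 2 * (B1 - A1) * (B2 - A2) / M" using lt1 lt2 by simp
  finally show ?thesis .
qed

lemma det_bound:
  assumes lp: "light_path \<gamma>" and fin: "\<And>T. finite (\<omega> \<inter> BT T y)"
  shows "\<exists>T. T \<subseteq> {..<2*M} \<and>
     card (slice \<omega> y \<inter> rectuv A1 B1 A2 B2 \<inter> \<gamma> ` {0..1}) \<le> card (\<omega> \<inter> BT T y)"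
proof (cases "finite (slice \<omega> y \<inter> rectuv A1 B1 A2 B2 \<inter> \<gamma> ` {0..1})")
  case False
  then show ?thesis by (intro exI[of _ "{}"]) auto
next
  case True
  define S where "S = slice \<omega> y \<inter> rectuv A1 B1 A2 B2 \<inter> \<gamma> ` {0..1}"
  have finC: "finite (cidx ` S)" using True unfolding S_def by auto
  have subC: "cidx ` S \<subseteq> {..<M} \<times> {..<M}"
    using idx_lt[OF M1] unfolding cidx_def by auto
  have chC: "pcomp p q" if pS: "p \<in> cidx ` S" "q \<in> cidx ` S" for p q
  proof -
    obtain p' q' where pq: "p' \<in> S" "q' \<in> S" "p = cidx p'" "q = cidx q'" using pS by blast
    have "(uu p' \<le> uu q' \<and> vv p' \<le> vv q') \<or> (uu q' \<le> uu p' \<and> vv q' \<le> vv p')"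
      using light_path_cmp[OF lp] pq unfolding S_def by auto
    then show ?thesis using pq idx_mono h_pos unfolding pcomp_def cidx_def by auto
  qed
  obtain T where T: "T \<subseteq> {..<2*M}" "cidx ` S \<subseteq> stair M T"
    using chain_in_stair[OF finC subC chC] by blast
  have "S \<subseteq> region T"
  proof
    fix p assume "p \<in> S"
    then have "p \<in> cell (cidx p)" "cidx p \<in> stair M T"
      using in_cell T unfolding S_def by auto
    then show "p \<in> region T" unfolding region_def by auto
  qed
  have "card S \<le> card (\<omega> \<inter> BT T y)"
  proof (rule card_inj_on_le[of "\<lambda>p. (fst p, y, snd p)"])
    show "inj_on (\<lambda>p. (fst p, y, snd p)) S" by (auto intro: inj_onI)
    show "(\<lambda>p. (fst p, y, snd p)) ` S \<subseteq> \<omega> \<inter> BT T y"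
    proof (rule image_subsetI)
      fix p assume pS: "p \<in> S"
      obtain x t where p: "p = (x, t)" by (cases p)
      have "(x, y, t) \<in> \<omega>" using pS p unfolding S_def slice_def by auto
      moreover have "(x, t) \<in> region T" using pS p \<open>S \<subseteq> region T\<close> by auto
      ultimately show "(fst p, y, snd p) \<in> \<omega> \<inter> BT T y" using p unfolding BT_def by auto
    qed
    show "finite (\<omega> \<inter> BT T y)" by (rule fin)
  qed
  then show ?thesis using T unfolding S_def by blast
qed

end



lemma summable_nq:
  fixes q :: real assumes "0 \<le> q" "q < 1"
  shows "summable (\<lambda>n. (real n + 1) * q^n)"
proof -
  have "summable (\<lambda>n. diffs (\<lambda>_. 1::real) n * q ^ n)"
    by (rule termdiff_converges[where K = 1]) (use assms in auto)
  then show ?thesis by (simp add: diffs_def add.commute)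
qed

lemma finite_PPP: "\<omega> \<in> PPP_space \<Longrightarrow> pp_bounded B \<Longrightarrow> finite (\<omega> \<inter> B)"
  unfolding PPP_space_def by auto

lemma tail_half:
  fixes \<mu> :: real and m :: nat and z :: real
  assumes "0 \<le> \<mu>" "\<mu> \<le> 2 * z" "16 * z \<le> m" "z > 0"
  shows "\<mu> ^ m / fact m \<le> (1/2) ^ m"
proof -
  have m1: "m \<ge> 1" using assms by (cases m) auto
  have "\<mu> ^ m / fact m \<le> (exp 1 * \<mu> / m) ^ m" by (rule fact_bound[OF assms(1) m1])
  also have "\<dots> \<le> (1/2) ^ m"
  proof (rule power_mono)
    have "exp 1 * \<mu> \<le> 3 * (2 * z)"
      using exp_le assms by (intro mult_mono) auto
    also have "\<dots> \<le> real m / 2" using assms by auto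
    finally show "exp 1 * \<mu> / real m \<le> 1/2" using m1 by (simp add: divide_le_eq)
    show "0 \<le> exp 1 * \<mu> / real m" using assms by auto
  qed
  finally show ?thesis .
qed

lemma powr_bound:
  fixes M m n :: nat and s :: real
  assumes "real M \<le> real n * s + 2" "16 * real n * s \<le> real m"
  shows "2 ^ (2 * M) * (1/2 :: real) ^ m \<le> 16 * (2 powr (- 14 * s)) ^ n"
proof -
  have "2 ^ (2 * M) * (1/2 :: real) ^ m = 2 powr (real (2 * M) - real m)"
  proof -
    have "(2::real) ^ (2 * M) = 2 powr (real (2 * M))" by (simp only: powr_realpow)
    then show ?thesis by (simp add: powr_diff powr_realpow power_divide)
  qed
  also have "\<dots> \<le> 2 powr (4 + (- 14 * s) * real n)"
    using assms by (intro powr_mono) (auto simp: algebra_simps)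
  also have "\<dots> = 16 * (2 powr (- 14 * s)) ^ n"
  proof -
    have "(2::real) powr (4 + (- 14 * s) * real n) = 2 powr 4 * 2 powr ((- 14 * s) * real n)"
      by (rule powr_add)
    also have "(2::real) powr 4 = 16" by (simp add: powr_numeral)
    also have "(2::real) powr ((- 14 * s) * real n) = (2 powr (- 14 * s)) powr (real n)"
      by (simp add: powr_powr)
    also have "\<dots> = (2 powr (- 14 * s)) ^ n" by (simp add: powr_realpow)
    finally show ?thesis .
  qed
  finally show ?thesis .
qed



lemma rect_AE:
  fixes a b c d :: real and Y :: nat
  assumes P: "poisson_pp P" and ab: "a < b" and cd: "c < d"
  shows "AE \<omega> in P. eventually (\<lambda>n. \<forall>y::int. \<forall>\<gamma>. \<bar>real_of_int y\<bar> \<le> real n * real Y \<longrightarrow> light_path \<gamma> \<longrightarrow>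
     card (slice \<omega> y \<inter> rectuv (n*a) (n*b) (n*c) (n*d) \<inter> \<gamma> ` {0..1})
       < nat \<lceil>16 * real n * sqrt ((b-a)*(d-c))\<rceil>) sequentially"
proof -
  interpret prob_space P using P unfolding poisson_pp_def by auto
  have spP: "space P = PPP_space" using P unfolding poisson_pp_def by auto
  define s where "s = sqrt ((b-a)*(d-c))"
  have s0: "s > 0" unfolding s_def using ab cd by auto
  define M where "M n = nat \<lceil>real n * s\<rceil> + 1" for n :: nat
  define m where "m n = nat \<lceil>16 * real n * s\<rceil>" for n :: nat
  define BTn where "BTn n T y = grid.BT (n*a) (n*b) (n*c) (n*d) (M n) T y" for n :: nat and T y
  define Ys where "Ys n = {-(int n * int Y)..int n * int Y}" for n :: nat
  define En where "En n = (if n = 0 then {} else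
      \<Union>y\<in>Ys n. \<Union>T\<in>Pow {..<2 * M n}. {\<omega>\<in>space P. m n \<le> card (\<omega> \<inter> BTn n T y)})" for n
  define q where "q = 2 powr (- 14 * s)"
  have q01: "0 \<le> q" "q < 1"
  proof -
    show "0 \<le> q" unfolding q_def by auto
    have "(2::real) powr (- 14 * s) < 2 powr 0" by (rule powr_less_mono) (use s0 in auto)
    then show "q < 1" unfolding q_def by simp
  qed
  have gr: "grid (n*a) (n*b) (n*c) (n*d) (M n)" if "n \<ge> 1" for n
    unfolding grid_def M_def using that ab cd by auto
  have Bs: "{\<omega>\<in>space P. k \<le> card (\<omega> \<inter> BTn n T y)} \<in> sets P" if "n \<ge> 1" for n k T y
    unfolding BTn_def
    by (rule poisson_ge_sets[OF P grid.BT_borel[OF gr[OF that]] grid.BT_bounded[OF gr[OF that]]])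
  have Es: "En n \<in> sets P" for n
    unfolding En_def using Bs by (auto intro!: sets.finite_UN simp: Ys_def)
  have Mge: "real n * s \<le> real (M n)" for n
    unfolding M_def using le_of_int_ceiling[of "real n * s"] by linarith
  have Mle: "real (M n) \<le> real n * s + 2" for n
  proof -
    have "real_of_int \<lceil>real n * s\<rceil> \<le> real n * s + 1" by (rule of_int_ceiling_le_add_one)
    moreover have "0 \<le> real n * s" using s0 by auto
    then have "real (M n) = real_of_int \<lceil>real n * s\<rceil> + 1" unfolding M_def by simp
    ultimately show ?thesis by linarith
  qed
  have mge: "16 * real n * s \<le> real (m n)" for n
    unfolding m_def using le_of_int_ceiling[of "16 * real n * s"] by linarith
  have single: "measure P {\<omega>\<in>space P. m n \<le> card (\<omega> \<inter> BTn n T y)} \<le> (1/2) ^ m n"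
    if n1: "n \<ge> 1" for n T y
  proof -
    define \<mu> where "\<mu> = enn2real (pp_intensity (BTn n T y))"
    have "\<mu> \<le> 2 * (n*b - n*a) * (n*d - n*c) / M n"
      unfolding \<mu>_def BTn_def by (rule grid.intensity_BT[OF gr[OF n1]])
    also have "\<dots> = 2 * (real n * s) * (real n * s) / M n"
    proof -
      have ss: "s * s = (b-a)*(d-c)" unfolding s_def using ab cd by simp
      have "(real n * s) * (real n * s) = real n * real n * (s * s)" by (simp add: algebra_simps)
      also have "\<dots> = (n*b - n*a) * (n*d - n*c)" unfolding ss by (simp add: algebra_simps)
      finally show ?thesis by (simp add: mult.assoc)
    qed
    also have "\<dots> \<le> 2 * (real n * s)"
    proof -
      have ns: "0 < real n * s" using n1 s0 by auto
      then have "(real n * s) * (real n * s) \<le> (real n * s) * M n"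
        using Mge by (intro mult_left_mono) auto
      then show ?thesis using ns Mge by (simp add: divide_le_eq)
    qed
    finally have mu: "\<mu> \<le> 2 * (real n * s)" .
    have "measure P {\<omega>\<in>space P. m n \<le> card (\<omega> \<inter> BTn n T y)} \<le> \<mu> ^ m n / fact (m n)"
      unfolding \<mu>_def BTn_def
      by (rule poisson_tail[OF P grid.BT_borel[OF gr[OF n1]] grid.BT_bounded[OF gr[OF n1]]])
    also have "\<dots> \<le> (1/2) ^ m n"
      by (rule tail_half[OF _ mu]) (use mge n1 s0 in \<open>auto simp: \<mu>_def algebra_simps\<close>)
    finally show ?thesis .
  qed
  have bound: "measure P (En n) \<le> 16 * (2 * real Y + 1) * ((real n + 1) * q ^ n)" for n
  proof (cases "n = 0")
    case True
    then show ?thesis using q01 by (simp add: En_def)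
  next
    case False
    then have n1: "n \<ge> 1" by auto
    have "measure P (En n) \<le> (\<Sum>y\<in>Ys n. measure P (\<Union>T\<in>Pow {..<2 * M n}. {\<omega>\<in>space P. m n \<le> card (\<omega> \<inter> BTn n T y)}))"
      unfolding En_def using False Bs[OF n1]
      by (auto intro!: finite_measure_subadditive_finite sets.finite_UN simp: Ys_def)
    also have "\<dots> \<le> (\<Sum>y\<in>Ys n. \<Sum>T\<in>Pow {..<2 * M n}. measure P {\<omega>\<in>space P. m n \<le> card (\<omega> \<inter> BTn n T y)})"
      using Bs[OF n1] by (intro sum_mono finite_measure_subadditive_finite) auto
    also have "\<dots> \<le> (\<Sum>y\<in>Ys n. \<Sum>T\<in>Pow {..<2 * M n}. (1/2) ^ m n)"
      using single[OF n1] by (intro sum_mono) auto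
    also have "\<dots> = (2 * real n * real Y + 1) * (2 ^ (2 * M n) * (1/2) ^ m n)"
    proof -
      have "card (Ys n) = 2 * n * Y + 1" unfolding Ys_def by (simp add: nat_add_distrib nat_mult_distrib)
      moreover have "card (Pow {..<2 * M n}) = 2 ^ (2 * M n)" by (simp add: card_Pow)
      ultimately show ?thesis by simp
    qed
    also have "\<dots> \<le> ((2 * real Y + 1) * (real n + 1)) * (16 * q ^ n)"
    proof (rule mult_mono)
      show "2 * real n * real Y + 1 \<le> (2 * real Y + 1) * (real n + 1)"
        by (simp add: algebra_simps)
      show "2 ^ (2 * M n) * (1 / 2) ^ m n \<le> 16 * q ^ n"
        unfolding q_def by (rule powr_bound[OF Mle mge])
    qed (use q01 in auto)
    finally show ?thesis by (simp add: algebra_simps)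
  qed
  have summ: "summable (\<lambda>n. measure P (En n))"
  proof (rule summable_comparison_test[OF _ summable_mult[OF summable_nq[OF q01]]])
    show "\<exists>N. \<forall>n\<ge>N. norm (measure P (En n)) \<le> 16 * (2 * real Y + 1) * ((real n + 1) * q ^ n)"
      using bound by auto
  qed
  have BC: "AE \<omega> in P. eventually (\<lambda>n. \<omega> \<in> space P - En n) sequentially"
    by (rule borel_cantelli_AE1[OF Es _ summ]) (simp add: emeasure_eq_measure)
  show ?thesis
    using BC AE_space
  proof eventually_elim
    case (elim \<omega>)
    have \<omega>P: "\<omega> \<in> PPP_space" using elim spP by auto
    show ?case using elim(1) eventually_ge_at_top[of 1]
    proof eventually_elim
      case (elim n)
      show ?case
      proof (intro allI impI)
        fix y :: int and \<gamma>
        assume yY: "\<bar>real_of_int y\<bar> \<le> real n * real Y" and lp: "light_path \<gamma>"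
        have fin: "finite (\<omega> \<inter> grid.BT (n*a) (n*b) (n*c) (n*d) (M n) T y)" for T
          by (rule finite_PPP[OF \<omega>P grid.BT_bounded[OF gr]]) (use elim in auto)
        obtain T where T: "T \<subseteq> {..<2 * M n}"
          "card (slice \<omega> y \<inter> rectuv (n*a) (n*b) (n*c) (n*d) \<inter> \<gamma> ` {0..1})
             \<le> card (\<omega> \<inter> grid.BT (n*a) (n*b) (n*c) (n*d) (M n) T y)"
          using grid.det_bound[OF gr lp fin] elim by blast
        have "\<bar>y\<bar> \<le> int n * int Y"
        proof -
          have "real n * real Y = real_of_int (int n * int Y)" by simp
          then show ?thesis using yY by (metis of_int_abs of_int_le_iff)
        qed
        then have "y \<in> Ys n" unfolding Ys_def by auto
        then have "\<not> m n \<le> card (\<omega> \<inter> BTn n T y)"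
          using elim T(1) \<omega>P spP unfolding En_def by auto
        then show "card (slice \<omega> y \<inter> rectuv (n*a) (n*b) (n*c) (n*d) \<inter> \<gamma> ` {0..1})
            < nat \<lceil>16 * real n * sqrt ((b-a)*(d-c))\<rceil>"
          using T(2) unfolding BTn_def m_def s_def by linarith
      qed
    qed
  qed
qed



lemma light_path_const: "light_path (\<lambda>_. (0, 0))"
  unfolding light_path_def by auto

lemma Lup_lt:
  assumes "\<And>\<gamma>. light_path \<gamma> \<Longrightarrow> card (A \<inter> \<gamma> ` {0..1}) < K"
  shows "Lup A < K"
proof -
  define S where "S = {card (A \<inter> \<gamma> ` {0..1}) | \<gamma>. light_path \<gamma>}"
  have sub: "S \<subseteq> {..<K}" using assms unfolding S_def by auto
  have fin: "finite S" using sub by (rule finite_subset) auto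
  have ne: "S \<noteq> {}" using light_path_const unfolding S_def by auto
  have "Max S \<in> S" using fin ne by (rule Max_in)
  then show ?thesis using sub unfolding Lup_def S_def[symmetric] by auto
qed

lemma finite_slice_box:
  assumes "\<omega> \<in> PPP_space"
  shows "finite (slice \<omega> y \<inter> rectuv A1 B1 A2 B2)"
proof -
  define B where "B = {p. (fst p, snd (snd p)) \<in> rectuv A1 B1 A2 B2 \<and> fst (snd p) = y}"
  have bd: "pp_bounded B"
    unfolding pp_bounded_def
  proof (intro exI ballI)
    fix p assume "p \<in> B"
    then have "(fst p, snd (snd p)) \<in> rectuv A1 B1 A2 B2" "fst (snd p) = y"
      unfolding B_def by auto
    then show "\<bar>fst p\<bar> \<le> \<bar>A1\<bar> + \<bar>B1\<bar> + \<bar>A2\<bar> + \<bar>B2\<bar> + \<bar>real_of_int y\<bar> \<and>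
      \<bar>real_of_int (fst (snd p))\<bar> \<le> \<bar>A1\<bar> + \<bar>B1\<bar> + \<bar>A2\<bar> + \<bar>B2\<bar> + \<bar>real_of_int y\<bar> \<and>
      \<bar>snd (snd p)\<bar> \<le> \<bar>A1\<bar> + \<bar>B1\<bar> + \<bar>A2\<bar> + \<bar>B2\<bar> + \<bar>real_of_int y\<bar>"
      unfolding rectuv_def by auto
  qed
  have "slice \<omega> y \<inter> rectuv A1 B1 A2 B2 \<subseteq> (\<lambda>p. (fst p, snd (snd p))) ` (\<omega> \<inter> B)"
  proof
    fix p assume p: "p \<in> slice \<omega> y \<inter> rectuv A1 B1 A2 B2"
    obtain x t where xt: "p = (x, t)" by (cases p)
    have "(x, y, t) \<in> \<omega> \<inter> B" using p xt unfolding slice_def B_def by auto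
    then show "p \<in> (\<lambda>p. (fst p, snd (snd p))) ` (\<omega> \<inter> B)" using xt by force
  qed
  moreover have "finite (\<omega> \<inter> B)" by (rule finite_PPP[OF assms bd])
  ultimately show ?thesis by (meson finite_imageI finite_subset)
qed

lemma dilate_sub:
  assumes "n \<ge> 0" "a' \<le> a" "b \<le> b'" "c' \<le> c" "d \<le> d'"
  shows "dilate n (rectuv a b c d) \<subseteq> rectuv (n*a') (n*b') (n*c') (n*d')"
proof
  fix q assume "q \<in> dilate n (rectuv a b c d)"
  then obtain x t where p: "(x, t) \<in> rectuv a b c d" "q = (n * x, n * t)"
    unfolding dilate_def by (auto simp: scaleR_prod_def)
  have "a' \<le> t - x" "t - x \<le> b'" "c' \<le> t + x" "t + x \<le> d'" using p assms unfolding rectuv_def by auto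
  then have "n * a' \<le> n * (t - x)" "n * (t - x) \<le> n * b'" "n * c' \<le> n * (t + x)" "n * (t + x) \<le> n * d'"
    using assms(1) by (auto intro: mult_left_mono)
  then show "q \<in> rectuv (n*a') (n*b') (n*c') (n*d')"
    using p unfolding rectuv_def by (auto simp: algebra_simps)
qed

theorem lemma5p4:
  fixes P :: "(real \<times> int \<times> real) set measure"
  assumes "poisson_pp P"
  shows "\<exists>c>0. AE \<omega> in P. \<forall>R (Y::real). light_rect R \<longrightarrow> Y > 0 \<longrightarrow>
    limsup (\<lambda>n::nat. ereal (SUP y\<in>{y::int. \<bar>real_of_int y\<bar> \<le> real n * Y}.
        real (Lup (slice \<omega> y \<inter> dilate (real n) R)) / real n))
      \<le> ereal (c * sqrt (measure lborel R))"
proof (intro exI[of _ 32] conjI)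
  show "(0::real) < 32" by simp
  let ?G = "\<lambda>(a::real) (b::real) (c::real) (d::real) (Y::nat) (\<omega>::(real \<times> int \<times> real) set). eventually (\<lambda>n. \<forall>y::int. \<forall>\<gamma>. \<bar>real_of_int y\<bar> \<le> real n * real Y \<longrightarrow> light_path \<gamma> \<longrightarrow>
     card (slice \<omega> y \<inter> rectuv (n*a) (n*b) (n*c) (n*d) \<inter> \<gamma> ` {0..1})
       < nat \<lceil>16 * real n * sqrt ((b-a)*(d-c))\<rceil>) sequentially"
  have "AE \<omega> in P. \<forall>i :: rat \<times> rat \<times> rat \<times> rat \<times> nat.
      (case i of (qa, qb, qc, qd, Y) \<Rightarrow> qa < qb \<longrightarrow> qc < qd \<longrightarrow>
         ?G (of_rat qa) (of_rat qb) (of_rat qc) (of_rat qd) Y \<omega>)"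
  proof (subst AE_all_countable, intro allI)
    fix i :: "rat \<times> rat \<times> rat \<times> rat \<times> nat"
    obtain qa qb qc qd Y where i: "i = (qa, qb, qc, qd, Y)" by (cases i) auto
    show "AE \<omega> in P. (case i of (qa, qb, qc, qd, Y) \<Rightarrow> qa < qb \<longrightarrow> qc < qd \<longrightarrow>
         ?G (of_rat qa) (of_rat qb) (of_rat qc) (of_rat qd) Y \<omega>)"
    proof (cases "qa < qb \<and> qc < qd")
      case True
      then have "AE \<omega> in P. ?G (of_rat qa) (of_rat qb) (of_rat qc) (of_rat qd) Y \<omega>"
        by (intro rect_AE[OF assms]) (auto simp: of_rat_less)
      then show ?thesis by (rule AE_mp) (auto simp: i)
    next
      case False
      then show ?thesis by (intro AE_I2) (auto simp: i)
    qed
  qed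
  then show "AE \<omega> in P. \<forall>R (Y::real). light_rect R \<longrightarrow> Y > 0 \<longrightarrow>
    limsup (\<lambda>n::nat. ereal (SUP y\<in>{y::int. \<bar>real_of_int y\<bar> \<le> real n * Y}.
        real (Lup (slice \<omega> y \<inter> dilate (real n) R)) / real n))
      \<le> ereal (32 * sqrt (measure lborel R))"
    using AE_space
  proof eventually_elim
    case (elim \<omega>)
    have \<omega>P: "\<omega> \<in> PPP_space" using elim(2) assms unfolding poisson_pp_def by auto
    show ?case
    proof (intro allI impI)
      fix R and Y :: real
      assume lr: "light_rect R" and Y0: "Y > 0"
      obtain a b c d where abcd: "a < b" "c < d" and R: "R = rectuv a b c d"
        using lr unfolding light_rect_def rectuv_def by blast
      define \<delta> where "\<delta> = min (b - a) (d - c) / 6"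
      have \<delta>0: "\<delta> > 0" unfolding \<delta>_def using abcd by auto
      obtain qa where qa: "a - \<delta> < of_rat qa" "of_rat qa < a" using of_rat_dense[of "a - \<delta>" a] \<delta>0 by auto
      obtain qb where qb: "b < of_rat qb" "of_rat qb < b + \<delta>" using of_rat_dense[of b "b + \<delta>"] \<delta>0 by auto
      obtain qc where qc: "c - \<delta> < of_rat qc" "of_rat qc < c" using of_rat_dense[of "c - \<delta>" c] \<delta>0 by auto
      obtain qd where qd: "d < of_rat qd" "of_rat qd < d + \<delta>" using of_rat_dense[of d "d + \<delta>"] \<delta>0 by auto
      define a' b' c' d' where "a' = (of_rat qa :: real)" "b' = (of_rat qb :: real)"
        "c' = (of_rat qc :: real)" "d' = (of_rat qd :: real)"
      note defs' = this
      have lt: "qa < qb" "qc < qd"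
      proof -
        have "(of_rat qa::real) < of_rat qb" "(of_rat qc::real) < of_rat qd"
          using qa qb qc qd abcd by linarith+
        then show "qa < qb" "qc < qd" by (simp_all add: of_rat_less)
      qed
      define Y' where "Y' = nat \<lceil>Y\<rceil>"
      have YY': "Y \<le> real Y'" unfolding Y'_def by linarith
      have ev: "?G a' b' c' d' Y' \<omega>"
        using elim(1)[rule_format, of "(qa, qb, qc, qd, Y')"] lt unfolding defs' by auto
      define s' where "s' = sqrt ((b'-a')*(d'-c'))"
      have meas: "measure lborel R = (b - a) * (d - c) / 2"
        unfolding R measure_def using abcd by (simp add: emeasure_rectuv)
      have s'le: "16 * s' \<le> 32 * sqrt (measure lborel R)"
      proof -
        have "b' - a' \<le> (b - a) * (4/3)" "d' - c' \<le> (d - c) * (4/3)"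
        proof -
          have "\<delta> \<le> (b - a) / 6" "\<delta> \<le> (d - c) / 6" unfolding \<delta>_def by auto
          then show "b' - a' \<le> (b - a) * (4/3)"
            using qa qb unfolding defs' by (simp add: algebra_simps; linarith)
          from \<open>\<delta> \<le> (d - c) / 6\<close> show "d' - c' \<le> (d - c) * (4/3)"
            using qc qd unfolding defs' by (simp add: algebra_simps; linarith)
        qed
        moreover have "0 \<le> b' - a'" "0 \<le> d' - c'" using qa qb qc qd abcd unfolding defs' by auto
        ultimately have "(b'-a')*(d'-c') \<le> ((b - a) * (4/3)) * ((d - c) * (4/3))"
          by (intro mult_mono) auto
        also have "\<dots> \<le> 4 * ((b - a) * (d - c) / 2)"
        proof -
          have X: "0 < (b - a) * (d - c)" using abcd by simp
          have "((b - a) * (4/3)) * ((d - c) * (4/3)) = 16/9 * ((b - a) * (d - c))" by (simp add: field_simps)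
          then show ?thesis using X by linarith
        qed
        finally have "s' \<le> sqrt (4 * ((b - a) * (d - c) / 2))"
          unfolding s'_def by (rule real_sqrt_le_mono)
        also have "\<dots> = 2 * sqrt (measure lborel R)"
        proof -
          have s4: "sqrt (4::real) = 2" by (rule real_sqrt_unique) auto
          have "sqrt (4 * ((b - a) * (d - c) / 2)) = sqrt 4 * sqrt ((b - a) * (d - c) / 2)"
            by (rule real_sqrt_mult)
          then show ?thesis by (simp only: s4 meas)
        qed
        finally show ?thesis by simp
      qed
      have "eventually (\<lambda>n. ereal (SUP y\<in>{y::int. \<bar>real_of_int y\<bar> \<le> real n * Y}.
          real (Lup (slice \<omega> y \<inter> dilate (real n) R)) / real n) \<le> ereal (32 * sqrt (measure lborel R))) sequentially"
        using ev eventually_ge_at_top[of 1]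
      proof eventually_elim
        case (elim n)
        have each: "real (Lup (slice \<omega> y \<inter> dilate (real n) R)) / real n \<le> 16 * s'"
          if y: "\<bar>real_of_int y\<bar> \<le> real n * Y" for y
        proof -
          have yY: "\<bar>real_of_int y\<bar> \<le> real n * real Y'"
            using y YY' by (meson dual_order.trans mult_left_mono of_nat_0_le_iff)
          have sub: "slice \<omega> y \<inter> dilate (real n) R \<subseteq> slice \<omega> y \<inter> rectuv (n*a') (n*b') (n*c') (n*d')"
            unfolding R using dilate_sub[of "real n" a' a b b' c' c d d'] qa qb qc qd unfolding defs' by auto
          have finS: "finite (slice \<omega> y \<inter> rectuv (n*a') (n*b') (n*c') (n*d'))"
            by (rule finite_slice_box[OF \<omega>P])
          have "Lup (slice \<omega> y \<inter> dilate (real n) R) < nat \<lceil>16 * real n * s'\<rceil>"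
          proof (rule Lup_lt)
            fix \<gamma> assume lp: "light_path \<gamma>"
            have "card (slice \<omega> y \<inter> dilate (real n) R \<inter> \<gamma> ` {0..1})
                \<le> card (slice \<omega> y \<inter> rectuv (n*a') (n*b') (n*c') (n*d') \<inter> \<gamma> ` {0..1})"
              by (rule card_mono) (use finS sub in auto)
            also have "\<dots> < nat \<lceil>16 * real n * s'\<rceil>"
              using elim(1) yY lp unfolding s'_def by auto
            finally show "card (slice \<omega> y \<inter> dilate (real n) R \<inter> \<gamma> ` {0..1}) < nat \<lceil>16 * real n * s'\<rceil>" .
          qed
          then have "real (Lup (slice \<omega> y \<inter> dilate (real n) R)) + 1 \<le> real (nat \<lceil>16 * real n * s'\<rceil>)"
            by linarith
          also have "\<dots> < 16 * real n * s' + 1"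
          proof -
            have "0 \<le> b' - a'" "0 \<le> d' - c'" using qa qb qc qd abcd unfolding defs' by auto
            then have "0 \<le> s'" unfolding s'_def by auto
            then have "0 \<le> 16 * real n * s'" by auto
            then show ?thesis by linarith
          qed
          finally have "real (Lup (slice \<omega> y \<inter> dilate (real n) R)) \<le> 16 * s' * real n" by (simp add: mult_ac)
          then show ?thesis using elim(2) by (simp add: divide_le_eq)
        qed
        have fy: "finite {y::int. \<bar>real_of_int y\<bar> \<le> real n * Y}"
        proof (rule finite_subset)
          show "{y::int. \<bar>real_of_int y\<bar> \<le> real n * Y} \<subseteq> {-(int n * int Y')..int n * int Y'}"
          proof
            fix y :: int assume "y \<in> {y::int. \<bar>real_of_int y\<bar> \<le> real n * Y}"
            then have "\<bar>real_of_int y\<bar> \<le> real n * real Y'"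
              using YY' by (simp add: order_trans[OF _ mult_left_mono])
            then have "\<bar>real_of_int y\<bar> \<le> real_of_int (int n * int Y')" by simp
            then have "\<bar>y\<bar> \<le> int n * int Y'" by (metis of_int_abs of_int_le_iff)
            then show "y \<in> {-(int n * int Y')..int n * int Y'}" by auto
          qed
        qed auto
        have ne: "{y::int. \<bar>real_of_int y\<bar> \<le> real n * Y} \<noteq> {}"
          using Y0 by (auto intro!: exI[of _ 0])
        have "(SUP y\<in>{y::int. \<bar>real_of_int y\<bar> \<le> real n * Y}.
            real (Lup (slice \<omega> y \<inter> dilate (real n) R)) / real n) \<le> 16 * s'"
          by (rule cSUP_least[OF ne]) (use each in auto)
        then show ?case using s'le by auto
      qed
      then show "limsup (\<lambda>n::nat. ereal (SUP y\<in>{y::int. \<bar>real_of_int y\<bar> \<le> real n * Y}.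
          real (Lup (slice \<omega> y \<inter> dilate (real n) R)) / real n))
        \<le> ereal (32 * sqrt (measure lborel R))"
        by (rule Limsup_bounded)
    qed
  qed
qed

end
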